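(* Let $f:\mathbb{R}^d\to\mathbb{R}$ be $L$-smooth (i.e. differentiable with $L$-Lipschitz gradient), let $g:\mathbb{R}^d\to\mathbb{R}$, let $h:\mathbb{R}^d\to\mathbb{R}\cup\{+\infty\}$ be proper, closed and convex, and let $\lambda>0$. Suppose that for every $w$ the minimum in $\min_{x}\left(\frac{1}{2\lambda}\|w-x\|_2^2+g(x)\right)$ is attained, and let $\zeta^{\lambda}(w)$ denote a chosen minimizer. Define $e_{\lambda}g(w)=\min_{x}\left(\frac{1}{2\lambda}\|w-x\|_2^2+g(x)\right)$, $D^{\lambda}(w)=\sup_{x\in\mathbb{R}^d}\left(\frac{1}{\lambda}w^Tx-\frac{1}{2\lambda}\|x\|_2^2-g(x)\right)$, and $\tilde\Phi_{\lambda}(w)=f(w)+e_{\lambda}g(w)+h(w)$. Fix a point $w^k\in\mathbb{R}^d$ and define $$U^k_{\lambda}(w)=\frac{1}{2\lambda}\|w\|_2^2-D^{\lambda}(w^k)-\frac{1}{\lambda}\zeta^{\lambda}(w^k)^T(w-w^k),\qquad E^k_{\lambda}(w)=f(w)+U^k_{\lambda}(w).$$ Then: (i) $E^k_{\lambda}(w)+h(w)\ge \tilde\Phi_{\lambda}(w)$ for all $w\in\mathbb{R}^d$; (ii) $E^k_{\lambda}(w^k)+h(w^k)=\tilde\Phi_{\lambda}(w^k)$; (iii) $E^k_{\lambda}$ is $L_{\lambda}$-smooth with $L_{\lambda}:=L+\frac{1}{\lambda}$.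
   Context: A function is $L$-smooth if it is differentiable and its gradient is $L$-Lipschitz with respect to the Euclidean norm. *)

theory Defs
  imports "HOL-Analysis.Analysis"
begin

definition L_smooth :: "real \<Rightarrow> ('a::euclidean_space \<Rightarrow> real) \<Rightarrow> bool" where
  "L_smooth L f \<longleftrightarrow>
     (\<exists>G :: 'a \<Rightarrow> 'a.
        (\<forall>x. (f has_derivative (\<lambda>v. G x \<bullet> v)) (at x)) \<and>
        (\<forall>x y. norm (G x - G y) \<le> L * norm (x - y)))"

definition proper_fun :: "('a \<Rightarrow> ereal) \<Rightarrow> bool" where
  "proper_fun h \<longleftrightarrow> (\<forall>x. h x \<noteq> -\<infinity>) \<and> (\<exists>x. h x \<noteq> \<infinity>)"

definition closed_fun :: "('a::topological_space \<Rightarrow> ereal) \<Rightarrow> bool" where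
  "closed_fun h \<longleftrightarrow> closed {(x, r::real). h x \<le> ereal r}"

definition convex_fun :: "('a::real_vector \<Rightarrow> ereal) \<Rightarrow> bool" where
  "convex_fun h \<longleftrightarrow> (\<forall>x y t. 0 \<le> t \<and> t \<le> 1 \<longrightarrow>
      h ((1 - t) *\<^sub>R x + t *\<^sub>R y) \<le> ereal (1 - t) * h x + ereal t * h y)"

definition moreau_env :: "real \<Rightarrow> ('a::euclidean_space \<Rightarrow> real) \<Rightarrow> 'a \<Rightarrow> real" where
  "moreau_env lam g w = (INF x. 1 / (2 * lam) * (norm (w - x))\<^sup>2 + g x)"

definition D_fun :: "real \<Rightarrow> ('a::euclidean_space \<Rightarrow> real) \<Rightarrow> 'a \<Rightarrow> real" where
  "D_fun lam g w = (SUP x. 1 / lam * (w \<bullet> x) - 1 / (2 * lam) * (norm x)\<^sup>2 - g x)"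

end

theory Submission
  imports Defs
begin

lemma nsq_diff: "(norm (a - b))\<^sup>2 = (norm a)\<^sup>2 - 2 * (a \<bullet> b) + (norm (b::'a::real_inner))\<^sup>2"
  by (simp add: power2_norm_eq_inner inner_diff_left inner_diff_right inner_commute)

theorem mainTheorem1:
  fixes f g :: "'a::euclidean_space \<Rightarrow> real"
    and h :: "'a \<Rightarrow> ereal"
    and \<zeta> :: "'a \<Rightarrow> 'a"
    and L lam :: real and wk :: 'a
  assumes smooth: "L_smooth L f"
    and h_proper: "proper_fun h" and h_closed: "closed_fun h" and h_convex: "convex_fun h"
    and lam_pos: "lam > 0"
    and attained: "\<forall>w. \<exists>x. \<forall>y. 1 / (2 * lam) * (norm (w - x))\<^sup>2 + g x
                                 \<le> 1 / (2 * lam) * (norm (w - y))\<^sup>2 + g y"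
    and zeta_min: "\<forall>w y. 1 / (2 * lam) * (norm (w - \<zeta> w))\<^sup>2 + g (\<zeta> w)
                          \<le> 1 / (2 * lam) * (norm (w - y))\<^sup>2 + g y"
  defines "\<Phi> \<equiv> (\<lambda>w. ereal (f w + moreau_env lam g w) + h w)"
    and "E \<equiv> (\<lambda>w. f w + (1 / (2 * lam) * (norm w)\<^sup>2 - D_fun lam g wk
                                   - 1 / lam * (\<zeta> wk \<bullet> (w - wk))))"
  shows "(\<forall>w. ereal (E w) + h w \<ge> \<Phi> w)
       \<and> ereal (E wk) + h wk = \<Phi> wk
       \<and> L_smooth (L + 1 / lam) E"
proof -
  define q where "q w x = 1 / (2 * lam) * (norm (w - x))\<^sup>2 + g x" for w x
  define z where "z = \<zeta> wk"
  have env: "moreau_env lam g w = q w (\<zeta> w)" for w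
    unfolding moreau_env_def q_def[symmetric]
    by (rule cInf_eq_minimum) (use zeta_min q_def in auto)
  have D: "D_fun lam g wk = 1 / lam * (wk \<bullet> z) - 1 / (2 * lam) * (norm z)\<^sup>2 - g z"
    unfolding D_fun_def
  proof (rule cSup_eq_maximum)
    show "1 / lam * (wk \<bullet> z) - 1 / (2 * lam) * (norm z)\<^sup>2 - g z
      \<in> range (\<lambda>x. 1 / lam * (wk \<bullet> x) - 1 / (2 * lam) * (norm x)\<^sup>2 - g x)" by auto
  next
    fix y assume "y \<in> range (\<lambda>x. 1 / lam * (wk \<bullet> x) - 1 / (2 * lam) * (norm x)\<^sup>2 - g x)"
    then obtain x where y: "y = 1 / lam * (wk \<bullet> x) - 1 / (2 * lam) * (norm x)\<^sup>2 - g x" by auto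
    have "1 / (2 * lam) * (norm (wk - z))\<^sup>2 + g z \<le> 1 / (2 * lam) * (norm (wk - x))\<^sup>2 + g x"
      using zeta_min z_def by auto
    then show "y \<le> 1 / lam * (wk \<bullet> z) - 1 / (2 * lam) * (norm z)\<^sup>2 - g z"
      unfolding y nsq_diff using lam_pos by (simp add: field_simps)
  qed
  have Eq: "E w = f w + q w z" for w
    unfolding E_def D q_def nsq_diff z_def using lam_pos
    by (simp add: field_simps inner_diff_right inner_commute)
  have le: "moreau_env lam g w \<le> q w z" for w
    using env zeta_min q_def by auto
  have eqk: "moreau_env lam g wk = q wk z" using env z_def by simp
  have p1: "\<forall>w. ereal (E w) + h w \<ge> \<Phi> w"
  proof
    fix w
    have "ereal (f w + moreau_env lam g w) \<le> ereal (E w)" using le Eq by simp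
    then show "ereal (E w) + h w \<ge> \<Phi> w" unfolding \<Phi>_def by (rule add_right_mono)
  qed
  have p2: "ereal (E wk) + h wk = \<Phi> wk" unfolding \<Phi>_def Eq eqk by simp
  obtain G where G: "\<And>x. (f has_derivative (\<lambda>v. G x \<bullet> v)) (at x)"
    and GL: "\<And>x y. norm (G x - G y) \<le> L * norm (x - y)"
    using smooth unfolding L_smooth_def by blast
  define G2 where "G2 x = G x + (1 / lam) *\<^sub>R (x - z)" for x
  have Ealt: "E = (\<lambda>w. f w + (1 / (2 * lam) * (w \<bullet> w - 2 * (w \<bullet> z) + z \<bullet> z) + g z))"
  proof
    fix w show "E w = f w + (1 / (2 * lam) * (w \<bullet> w - 2 * (w \<bullet> z) + z \<bullet> z) + g z)"
      using Eq[of w] unfolding q_def nsq_diff by (simp add: power2_norm_eq_inner)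
  qed
  have p3: "L_smooth (L + 1 / lam) E"
    unfolding L_smooth_def
  proof (intro exI conjI allI)
    fix x
    have "((\<lambda>w. f w + (1 / (2 * lam) * (w \<bullet> w - 2 * (w \<bullet> z) + z \<bullet> z) + g z)) has_derivative
       (\<lambda>v. G x \<bullet> v + (1 / (2 * lam) * ((v \<bullet> x + x \<bullet> v) - 2 * (v \<bullet> z) + 0) + 0))) (at x)"
      by (intro derivative_eq_intros G) (auto simp: G)
    then show "(E has_derivative (\<lambda>v. G2 x \<bullet> v)) (at x)"
      unfolding Ealt G2_def
      by (rule has_derivative_eq_rhs)
         (use lam_pos in \<open>auto simp: fun_eq_iff inner_add_left inner_diff_left inner_add_right inner_diff_right inner_commute field_simps\<close>)
  next
    fix x y
    have "norm (G2 x - G2 y) = norm ((G x - G y) + (1 / lam) *\<^sub>R (x - y))"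
      unfolding G2_def by (simp add: algebra_simps)
    also have "\<dots> \<le> norm (G x - G y) + norm ((1 / lam) *\<^sub>R (x - y))" by (rule norm_triangle_ineq)
    also have "\<dots> \<le> L * norm (x - y) + 1 / lam * norm (x - y)"
      using GL[of x y] lam_pos by simp
    finally show "norm (G2 x - G2 y) \<le> (L + 1 / lam) * norm (x - y)" by (simp add: algebra_simps)
  qed
  show ?thesis using p1 p2 p3 by blast
qed

end
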